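(* Let $n,\nu$, $0=n_0<n_1<\cdots<n_\nu=n$, and $\bm h\in\mathbb{N}^n$ be as in the context, with $\bm h$ block monotone. Let $l:[0,1]\to[0,\infty)$ and $r,a,d:[0,1]\to\mathbb{N}$ be measurable with $(r(x),a(x),d(x))\in\mathcal{S}$ for all $x$ and $\int_0^1 l(x)r(x)\,dx<\infty$, and write $\mathcal{R}^c=\{(l(x),r(x),a(x),d(x)):x\in[0,1]\}$. Then $\bm h$ is adequate for $\mathcal{R}^c$ if and only if $W^c_{k_1\cdots k_\nu}(\bm h,\mathcal{R}^c)\ge0$ for every integer tuple $(k_1,\dots,k_\nu)$ with $0\le k_\kappa\le n_\kappa-n_{\kappa-1}$ for all $\kappa$.
   Context: Integers $0=n_0<n_1<\dots<n_\nu=n$ are fixed ($1\le\nu\le n$). The service set is $\mathcal{S}=\{(r,a,d)\in\mathbb{N}^3: a<d\le\nu,\ 0<r\le n_d-n_a\}$; service $(r,a,d)$ means one unit of power per unit of load in exactly $r$ of the slots $n_a+1,\dots,n_d$. $\bm h=(h_1,\dots,h_n)\in\mathbb{N}^n$ is block monotone: for each $\kappa$, $h_i\ge h_j$ whenever $n_{\kappa-1}+1\le i<j\le n_\kappa$. A continuum of consumers is indexed by $x\in[0,1]$; consumers in $[x,x+dx]$ demand $l(x)\,dx$ units/slot of power for $r(x)$ slots among slots $n_{a(x)}+1,\dots,n_{d(x)}$. Adequacy of $\bm h$ for $\mathcal{R}^c$ means: there exists a measurable $A:[0,1]\times\{1,\dots,n\}\to[0,1]$ with $A(x,j)=0$ for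 $j\notin\{n_{a(x)}+1,\dots,n_{d(x)}\}$, $\sum_{j=1}^nA(x,j)=r(x)$ for all $x$, and $\int_0^1 l(x)A(x,j)\,dx\le h_j$ for all $j$. With $[t]^+=\max\{t,0\}$, $$W^c_{k_1\cdots k_\nu}(\bm h,\mathcal{R}^c)=\sum_{\kappa=1}^{\nu}\sum_{j=n_{\kappa-1}+k_\kappa+1}^{n_\kappa}h_j-\int_0^1 l(x)\Big[r(x)-\sum_{\kappa=a(x)+1}^{d(x)}k_\kappa\Big]^+dx.$$ *)

theory Defs
  imports "HOL-Analysis.Analysis"
begin

text \<open>Time slots are 1..n; the block boundaries are N 0 = 0 < N 1 < ... < N nu = n.
  Consumers are indexed by x in [0,1] with Lebesgue measure.\<close>

definition unitI :: "real measure" where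
  "unitI = restrict_space lebesgue {0..1}"

definition in_services :: "(nat \<Rightarrow> nat) \<Rightarrow> nat \<Rightarrow> nat \<times> nat \<times> nat \<Rightarrow> bool" where
  "in_services N nu = (\<lambda>(r, a, d). a < d \<and> d \<le> nu \<and> 0 < r \<and> r \<le> N d - N a)"

definition block_monotone :: "(nat \<Rightarrow> nat) \<Rightarrow> nat \<Rightarrow> (nat \<Rightarrow> nat) \<Rightarrow> bool" where
  "block_monotone N nu h =
     (\<forall>\<kappa>\<in>{1..nu}. \<forall>i j. N (\<kappa> - 1) + 1 \<le> i \<and> i < j \<and> j \<le> N \<kappa> \<longrightarrow> h j \<le> h i)"

definition adequate ::
  "(nat \<Rightarrow> nat) \<Rightarrow> nat \<Rightarrow> (nat \<Rightarrow> nat) \<Rightarrow> (real \<Rightarrow> real) \<Rightarrow> (real \<Rightarrow> nat)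
     \<Rightarrow> (real \<Rightarrow> nat) \<Rightarrow> (real \<Rightarrow> nat) \<Rightarrow> bool" where
  "adequate N n h l r a d =
    (\<exists>A :: real \<Rightarrow> nat \<Rightarrow> real.
       (\<lambda>(x, j). A x j) \<in> borel_measurable (unitI \<Otimes>\<^sub>M count_space {1..n}) \<and>
       (\<forall>x\<in>{0..1}. \<forall>j\<in>{1..n}. 0 \<le> A x j \<and> A x j \<le> 1) \<and>
       (\<forall>x\<in>{0..1}. \<forall>j\<in>{1..n}. j \<notin> {N (a x) + 1 .. N (d x)} \<longrightarrow> A x j = 0) \<and>
       (\<forall>x\<in>{0..1}. (\<Sum>j=1..n. A x j) = real (r x)) \<and>
       (\<forall>j\<in>{1..n}. (\<integral>x. l x * A x j \<partial>unitI) \<le> real (h j)))"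

definition Wc ::
  "(nat \<Rightarrow> nat) \<Rightarrow> nat \<Rightarrow> (nat \<Rightarrow> nat) \<Rightarrow> (nat \<Rightarrow> nat) \<Rightarrow> (real \<Rightarrow> real) \<Rightarrow> (real \<Rightarrow> nat)
     \<Rightarrow> (real \<Rightarrow> nat) \<Rightarrow> (real \<Rightarrow> nat) \<Rightarrow> real" where
  "Wc N nu k h l r a d =
     (\<Sum>\<kappa>=1..nu. \<Sum>j = N (\<kappa> - 1) + k \<kappa> + 1 .. N \<kappa>. real (h j))
     - (\<integral>x. l x * max 0 (real (r x) - real (\<Sum>\<kappa> = a x + 1 .. d x. k \<kappa>)) \<partial>unitI)"

end

theory Submission
  imports Defs
begin


lemma block_sum:
  fixes f :: "nat \<Rightarrow> real"
  assumes "a \<le> d" "\<forall>\<kappa><d. N \<kappa> \<le> N (Suc \<kappa>)"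
  shows "N a \<le> N d \<and> sum f ({N a+1..N d} \<inter> X) = (\<Sum>\<kappa>=a+1..d. sum f ({N(\<kappa>-1)+1..N \<kappa>} \<inter> X))"
  using assms
proof (induction d)
  case 0
  then show ?case by simp
next
  case (Suc d)
  show ?case
  proof (cases "a = Suc d")
    case True
    then show ?thesis by simp
  next
    case False
    then have ad: "a \<le> d" using Suc by simp
    with Suc have IH: "N a \<le> N d \<and> sum f ({N a+1..N d} \<inter> X) = (\<Sum>\<kappa>=a+1..d. sum f ({N(\<kappa>-1)+1..N \<kappa>} \<inter> X))"
      by auto
    have m: "N d \<le> N (Suc d)" using Suc by auto
    have "{N a+1..N (Suc d)} \<inter> X = ({N a+1..N d} \<inter> X) \<union> ({N d+1..N (Suc d)} \<inter> X)"
      using IH m by auto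
    moreover have "sum f (({N a+1..N d} \<inter> X) \<union> ({N d+1..N (Suc d)} \<inter> X)) = sum f ({N a+1..N d} \<inter> X) + sum f ({N d+1..N (Suc d)} \<inter> X)"
      by (rule sum.union_disjoint) auto
    ultimately have "sum f ({N a+1..N (Suc d)} \<inter> X) = sum f ({N a+1..N d} \<inter> X) + sum f ({N d+1..N (Suc d)} \<inter> X)"
      by simp
    moreover have "{a+1..Suc d} = insert (Suc d) {a+1..d}" using ad by auto
    ultimately show ?thesis using IH m by simp
  qed
qed

lemma ivl_reindex:
  fixes f :: "nat \<Rightarrow> real"
  assumes "m \<le> q"
  shows "(\<Sum>j=q-m+1..q. f j) = (\<Sum>i<m. f (q - i))"
  using assms
proof (induction m)
  case 0
  then show ?case by simp
next
  case (Suc m)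
  have "{q - Suc m + 1..q} = insert (q - m) {q-m+1..q}" using Suc.prems by auto
  then have "(\<Sum>j=q-Suc m+1..q. f j) = f (q - m) + (\<Sum>j=q-m+1..q. f j)" by simp
  then show ?case using Suc by simp
qed

lemma mono_sum:
  fixes h :: "nat \<Rightarrow> real"
  assumes "\<forall>i j. p+1 \<le> i \<and> i < j \<and> j \<le> q \<longrightarrow> h j \<le> h i" "U \<subseteq> {p+1..q}"
  shows "(\<Sum>i<card U. h (q - i)) \<le> sum h U"
  using assms
proof (induction q arbitrary: U)
  case 0
  then show ?case by simp
next
  case (Suc q)
  have cU: "card U \<le> Suc q - p"
    using card_mono[OF _ Suc.prems(2)] by simp
  show ?case
  proof (cases "Suc q \<in> U")
    case True
    define U' where "U' = U - {Suc q}"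
    have U': "U' \<subseteq> {p+1..q}" using Suc.prems(2) U'_def by auto
    have fin: "finite U" using Suc.prems(2) finite_subset by blast
    have cU': "card U = Suc (card U')" using True fin U'_def
      by (metis card_Suc_Diff1)
    have IH: "(\<Sum>i<card U'. h (q - i)) \<le> sum h U'"
      using Suc.IH[OF _ U'] Suc.prems(1) by auto
    have "(\<Sum>i<card U. h (Suc q - i)) = h (Suc q) + (\<Sum>i<card U'. h (q - i))"
      unfolding cU' by (subst sum.lessThan_Suc_shift) simp
    moreover have "sum h U = h (Suc q) + sum h U'"
      using True fin U'_def by (simp add: sum.remove)
    ultimately show ?thesis using IH by simp
  next
    case False
    then have U: "U \<subseteq> {p+1..q}" using Suc.prems(2) by (auto simp: subset_iff le_Suc_eq)
    have IH: "(\<Sum>i<card U. h (q - i)) \<le> sum h U"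
      using Suc.IH[OF _ U] Suc.prems(1) by auto
    have cU2: "card U \<le> q - p" using card_mono[OF _ U] by simp
    have "(\<Sum>i<card U. h (Suc q - i)) \<le> (\<Sum>i<card U. h (q - i))"
    proof (rule sum_mono)
      fix i assume "i \<in> {..<card U}"
      then have "i < card U" by simp
      then have "p + 1 \<le> q - i" "q - i < Suc q - i" using cU2 by auto
      then show "h (Suc q - i) \<le> h (q - i)" using Suc.prems(1) by auto
    qed
    then show ?thesis using IH by simp
  qed
qed



lemma cont_coord: "continuous_on A (\<lambda>B. B p :: real)"
  by (rule continuous_on_subset[OF continuous_on_product_coordinates]) simp

lemma compact_box:
  fixes K :: "'a \<Rightarrow> real set"
  assumes "\<And>p. compact (K p)"
  shows "compact (PiE UNIV K)"
proof -
  have "compactin (product_topology (\<lambda>_. euclidean) UNIV) (PiE UNIV K)"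
    using assms by (simp add: compactin_PiE)
  then show ?thesis by (simp add: euclidean_product_topology)
qed

lemma exists_min:
  fixes S :: "'s set" and W :: "'s \<Rightarrow> nat set" and L :: "'s \<Rightarrow> real" and R :: "'s \<Rightarrow> nat"
    and hh :: "nat \<Rightarrow> real" and J :: "nat set"
  assumes fS: "finite S" and fJ: "finite J" and WJ: "\<forall>s\<in>S. W s \<subseteq> J"
    and RW: "\<forall>s\<in>S. R s \<le> card (W s)"
  defines "P \<equiv> {(s,j). s\<in>S \<and> j\<in>W s}"
  defines "F \<equiv> {B. (\<forall>p. B p \<in> (if p \<in> P then {0..1} else {0::real})) \<and> (\<forall>s\<in>S. (\<Sum>j\<in>W s. B (s,j)) = real (R s))}"
  shows "\<exists>Bm\<in>F. \<forall>B\<in>F. (\<Sum>i\<in>J. ((\<Sum>s\<in>S. L s * Bm (s,i)) - hh i)^2) \<le> (\<Sum>i\<in>J. ((\<Sum>s\<in>S. L s * B (s,i)) - hh i)^2)"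
proof (rule continuous_attains_inf)
  define K where "K p = (if p \<in> P then {0..1} else {0::real})" for p
  have FF: "F = PiE UNIV K \<inter> (\<Inter>s\<in>S. {B. (\<Sum>j\<in>W s. B (s,j)) = real (R s)})"
    unfolding F_def K_def PiE_UNIV_domain
    by (rule set_eqI) (simp only: mem_Collect_eq Int_iff INT_iff Pi_iff Ball_def UNIV_I simp_thms)
  have c1: "compact (PiE UNIV K)" by (rule compact_box) (simp add: K_def)
  have c2: "closed (\<Inter>s\<in>S. {B. (\<Sum>j\<in>W s. B (s,j)) = real (R s)})"
    by (intro closed_INT ballI closed_Collect_eq continuous_on_sum cont_coord continuous_on_const)
  show "compact F" unfolding FF using c1 c2 by (rule compact_Int_closed)
  define B0 where "B0 p = (if p \<in> P then real (R (fst p)) / real (card (W (fst p))) else 0)" for p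
  have "B0 \<in> F"
    unfolding F_def
  proof (intro CollectI conjI allI ballI)
    fix p show "B0 p \<in> (if p \<in> P then {0..1} else {0})"
    proof (cases "p \<in> P")
      case True
      then obtain s j where p: "p = (s,j)" "s \<in> S" "j \<in> W s" by (auto simp: P_def)
      have "R s \<le> card (W s)" using RW p(2) by blast
      then have "real (R s) / real (card (W s)) \<le> 1"
        by (cases "card (W s) = 0") (auto simp: divide_le_eq_1)
      then show ?thesis using True p by (simp add: B0_def)
    next
      case False
      then show ?thesis by (simp add: B0_def)
    qed
  next
    fix s assume s: "s \<in> S"
    have fW: "finite (W s)" using WJ s fJ finite_subset by blast
    show "(\<Sum>j\<in>W s. B0 (s,j)) = real (R s)"
    proof (cases "W s = {}")
      case True then show ?thesis using RW s True by fastforce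
    next
      case False
      then have "card (W s) > 0" using fW by (simp add: card_gt_0_iff)
      have "(\<Sum>j\<in>W s. B0 (s,j)) = (\<Sum>j\<in>W s. real (R s) / real (card (W s)))"
        by (rule sum.cong) (use s in \<open>auto simp: B0_def P_def\<close>)
      then show ?thesis using \<open>card (W s) > 0\<close> by simp
    qed
  qed
  then show "F \<noteq> {}" by blast
  show "continuous_on F (\<lambda>B. \<Sum>i\<in>J. ((\<Sum>s\<in>S. L s * B (s,i)) - hh i)^2)"
    by (intro continuous_on_sum continuous_on_power continuous_on_diff continuous_on_mult continuous_on_const cont_coord)
qed

lemma opt_step:
  fixes S :: "'s set" and W :: "'s \<Rightarrow> nat set" and L :: "'s \<Rightarrow> real" and R :: "'s \<Rightarrow> nat"
    and hh :: "nat \<Rightarrow> real" and J :: "nat set"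
  assumes fS: "finite S" and fJ: "finite J" and WJ: "\<forall>s\<in>S. W s \<subseteq> J"
  defines "P \<equiv> {(s,j). s\<in>S \<and> j\<in>W s}"
  defines "F \<equiv> {B. (\<forall>p. B p \<in> (if p \<in> P then {0..1} else {0::real})) \<and> (\<forall>s\<in>S. (\<Sum>j\<in>W s. B (s,j)) = real (R s))}"
  defines "\<Phi> \<equiv> (\<lambda>B. \<Sum>i\<in>J. ((\<Sum>s\<in>S. L s * B (s,i)) - hh i)^2)"
  assumes Bm: "Bm \<in> F" and minB: "\<forall>B\<in>F. \<Phi> Bm \<le> \<Phi> B"
    and s: "s \<in> S" and j: "j \<in> W s" and j': "j' \<in> W s" and Ls: "L s > 0"
    and pos: "Bm (s,j) > 0" and lt1: "Bm (s,j') < 1"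
  shows "(\<Sum>s\<in>S. L s * Bm (s,j)) - hh j \<le> (\<Sum>s\<in>S. L s * Bm (s,j')) - hh j'"
proof (rule ccontr)
  define e where "e i = (\<Sum>s\<in>S. L s * Bm (s,i)) - hh i" for i
  assume "\<not> ?thesis"
  then have ee: "e j' < e j" by (simp add: e_def)
  then have jj: "j \<noteq> j'" by auto
  have jJ: "j \<in> J" "j' \<in> J" using WJ s j j' by auto
  define \<delta> where "\<delta> = min (min (Bm (s,j)) (1 - Bm (s,j'))) ((e j - e j') / (2 * L s))"
  have dpos: "\<delta> > 0" using pos lt1 ee Ls by (simp add: \<delta>_def)
  have d1: "\<delta> \<le> Bm (s,j)" "\<delta> \<le> 1 - Bm (s,j')" "\<delta> \<le> (e j - e j') / (2 * L s)"
    by (auto simp: \<delta>_def)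
  define D where "D q = (if q = (s,j') then 1 else 0) - (if q = (s,j) then 1 else (0::real))" for q
  define B' where "B' q = Bm q + \<delta> * D q" for q
  have Bmp: "\<And>p. Bm p \<in> (if p \<in> P then {0..1} else {0::real})" using Bm unfolding F_def by blast
  have B'F: "B' \<in> F"
    unfolding F_def
  proof (intro CollectI conjI allI ballI)
    fix p
    show "B' p \<in> (if p \<in> P then {0..1} else {0})"
    proof (cases "p = (s,j)")
      case True
      then show ?thesis using Bmp[of p] d1 dpos jj s j by (auto simp: B'_def D_def P_def)
    next
      case False
      note F1 = this
      show ?thesis
      proof (cases "p = (s,j')")
        case True
        then show ?thesis using Bmp[of p] d1 dpos jj s j' by (auto simp: B'_def D_def P_def)
      next
        case False
        then show ?thesis using Bmp[of p] F1 by (simp add: B'_def D_def)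
      qed
    qed
  next
    fix s' assume s': "s' \<in> S"
    have fW: "finite (W s')" using WJ s' fJ finite_subset by blast
    have "(\<Sum>i\<in>W s'. D (s',i)) = 0"
    proof (cases "s' = s")
      case True
      then show ?thesis using fW j j' by (simp add: D_def sum_subtractf)
    next
      case False
      then show ?thesis by (simp add: D_def)
    qed
    then have "(\<Sum>i\<in>W s'. B' (s',i)) = (\<Sum>i\<in>W s'. Bm (s',i))"
      by (simp add: B'_def sum.distrib sum_distrib_left[symmetric])
    then show "(\<Sum>i\<in>W s'. B' (s',i)) = real (R s')" using Bm s' by (simp add: F_def)
  qed
  define E where "E i = (if i = j' then 1 else 0) - (if i = j then 1 else (0::real))" for i
  define c where "c = \<delta> * L s"
  have cpos: "c > 0" using dpos Ls by (simp add: c_def)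
  have cle: "2 * c \<le> e j - e j'"
    using d1(3) Ls by (simp add: c_def field_simps)
  have e': "(\<Sum>s\<in>S. L s * B' (s,i)) - hh i = e i + c * E i" for i
  proof -
    have "(\<Sum>s'\<in>S. L s' * D (s',i)) = L s * E i"
      using fS s by (simp add: D_def E_def sum_subtractf if_distrib[where f="\<lambda>x. _ * x"] sum.delta' algebra_simps
          cong: if_cong)
    then show ?thesis
      by (simp add: B'_def e_def c_def algebra_simps sum.distrib sum_distrib_left[symmetric])
  qed
  have "\<Phi> B' = (\<Sum>i\<in>J. (e i + c * E i)^2)" by (simp add: \<Phi>_def e')
  also have "\<dots> = (\<Sum>i\<in>J. (e i)^2) + 2 * c * (\<Sum>i\<in>J. e i * E i) + c^2 * (\<Sum>i\<in>J. (E i)^2)"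
    by (simp add: power2_eq_square algebra_simps sum.distrib sum_distrib_left)
  also have "(\<Sum>i\<in>J. e i * E i) = e j' - e j"
  proof -
    have "(\<Sum>i\<in>J. e i * E i) = (\<Sum>i\<in>J. (if i = j' then e i else 0) - (if i = j then e i else 0))"
      by (rule sum.cong) (auto simp: E_def)
    also have "\<dots> = e j' - e j" using fJ jJ by (simp add: sum_subtractf)
    finally show ?thesis .
  qed
  also have "(\<Sum>i\<in>J. (E i)^2) = 2"
  proof -
    have "\<And>i. (E i)^2 = (if i = j' then 1 else 0) + (if i = j then 1 else 0)"
      using jj by (simp add: E_def)
    then show ?thesis using fJ jJ by (simp add: sum.distrib sum.delta)
  qed
  also have "(\<Sum>i\<in>J. (e i)^2) = \<Phi> Bm" by (simp add: \<Phi>_def e_def)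
  finally have "\<Phi> B' = \<Phi> Bm + 2 * c * (e j' - e j + c)"
    by (simp add: power2_eq_square algebra_simps)
  moreover have "2 * c * (e j' - e j + c) < 0"
    using cpos cle ee by (simp add: mult_pos_neg)
  ultimately have "\<Phi> B' < \<Phi> Bm" by simp
  moreover have "\<Phi> Bm \<le> \<Phi> B'" using minB B'F by blast
  ultimately show False by simp
qed


lemma discrete_core:
  fixes S :: "'s set" and W :: "'s \<Rightarrow> nat set" and L :: "'s \<Rightarrow> real" and R :: "'s \<Rightarrow> nat"
    and hh :: "nat \<Rightarrow> real" and J :: "nat set"
  assumes fS: "finite S" and fJ: "finite J" and WJ: "\<forall>s\<in>S. W s \<subseteq> J"
    and RW: "\<forall>s\<in>S. R s \<le> card (W s)" and Lnn: "\<forall>s\<in>S. L s \<ge> 0"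
  shows "(\<exists>B. (\<forall>s\<in>S. \<forall>j\<in>J. 0 \<le> B s j \<and> B s j \<le> 1 \<and> (j \<notin> W s \<longrightarrow> B s j = 0))
              \<and> (\<forall>s\<in>S. (\<Sum>j\<in>W s. B s j) = real (R s))
              \<and> (\<forall>j\<in>J. (\<Sum>s\<in>S. L s * B s j) \<le> hh j))
       \<or> (\<exists>T\<subseteq>J. (\<Sum>j\<in>T. hh j) < (\<Sum>s\<in>S. L s * max 0 (real (R s) - real (card (W s - T)))))"
proof -
  define F where "F = {B. (\<forall>p. B p \<in> (if p \<in> {(s,j). s\<in>S \<and> j\<in>W s} then {0..1} else {0::real}))
        \<and> (\<forall>s\<in>S. (\<Sum>j\<in>W s. B (s,j)) = real (R s))}"
  have ex: "\<exists>Bm\<in>F. \<forall>B\<in>F. (\<Sum>i\<in>J. ((\<Sum>s\<in>S. L s * Bm (s,i)) - hh i)^2) \<le> (\<Sum>i\<in>J. ((\<Sum>s\<in>S. L s * B (s,i)) - hh i)^2)"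
    unfolding F_def by (rule exists_min[OF fS fJ WJ RW])
  then obtain Bm where Bm: "Bm \<in> F"
    and minB: "\<forall>B\<in>F. (\<Sum>i\<in>J. ((\<Sum>s\<in>S. L s * Bm (s,i)) - hh i)^2) \<le> (\<Sum>i\<in>J. ((\<Sum>s\<in>S. L s * B (s,i)) - hh i)^2)"
    by (rule bexE)
  have Bm': "(\<forall>p. Bm p \<in> (if p \<in> {(s,j). s\<in>S \<and> j\<in>W s} then {0..1} else {0::real}))
        \<and> (\<forall>s\<in>S. (\<Sum>j\<in>W s. Bm (s,j)) = real (R s))"
    using Bm unfolding F_def by (rule CollectD)
  define e where "e i = (\<Sum>s\<in>S. L s * Bm (s,i)) - hh i" for i
  have opt: "e j \<le> e j'" if "s \<in> S" "j \<in> W s" "j' \<in> W s" "L s > 0" "Bm (s,j) > 0" "Bm (s,j') < 1"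
    for s j j'
    unfolding e_def by (rule opt_step[OF fS fJ WJ Bm[unfolded F_def] minB[unfolded F_def] that])
  have Bmp: "\<And>p. Bm p \<in> (if p \<in> {(s,j). s\<in>S \<and> j\<in>W s} then {0..1} else {0::real})"
    using conjunct1[OF Bm'] by (rule spec)
  have Bsum: "\<And>s. s \<in> S \<Longrightarrow> (\<Sum>j\<in>W s. Bm (s,j)) = real (R s)" using conjunct2[OF Bm'] by (rule bspec)
  show ?thesis
  proof (cases "\<forall>j\<in>J. e j \<le> 0")
    case True
    have X1: "(\<forall>s\<in>S. \<forall>j\<in>J. 0 \<le> Bm (s,j) \<and> Bm (s,j) \<le> 1 \<and> (j \<notin> W s \<longrightarrow> Bm (s,j) = 0))"
    proof (intro ballI)
      fix s j assume "s \<in> S" "j \<in> J"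
      then show "0 \<le> Bm (s,j) \<and> Bm (s,j) \<le> 1 \<and> (j \<notin> W s \<longrightarrow> Bm (s,j) = 0)"
        using Bmp[of "(s,j)"] by (cases "j \<in> W s") auto
    qed
    have X2: "\<forall>j\<in>J. (\<Sum>s\<in>S. L s * Bm (s,j)) \<le> hh j" using True by (simp add: e_def)
    have X3: "\<forall>s\<in>S. (\<Sum>j\<in>W s. Bm (s,j)) = real (R s)" using Bsum by blast
    show ?thesis
      by (intro disjI1 exI[of _ "\<lambda>s j. Bm (s,j)"] conjI X1 X2 X3)
  next
    case False
    define T where "T = {j\<in>J. e j > 0}"
    have TJ: "T \<subseteq> J" by (auto simp: T_def)
    have fT: "finite T" using fJ by (simp add: T_def)
    have Tne: "T \<noteq> {}" using False by (auto simp: T_def)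
    have 1: "(\<Sum>j\<in>T. hh j) < (\<Sum>j\<in>T. \<Sum>s\<in>S. L s * Bm (s,j))"
      by (rule sum_strict_mono[OF fT Tne]) (auto simp: T_def e_def)
    have 2: "(\<Sum>j\<in>T. \<Sum>s\<in>S. L s * Bm (s,j)) = (\<Sum>s\<in>S. L s * (\<Sum>j\<in>T. Bm (s,j)))"
      by (subst sum.swap) (simp add: sum_distrib_left)
    have 3: "L s * (\<Sum>j\<in>T. Bm (s,j)) \<le> L s * max 0 (real (R s) - real (card (W s - T)))"
      if s: "s \<in> S" for s
    proof (cases "L s = 0")
      case True then show ?thesis by simp
    next
      case False
      then have Ls: "L s > 0" using Lnn s by force
      have fW: "finite (W s)" using WJ s fJ finite_subset by blast
      have eq: "(\<Sum>j\<in>T. Bm (s,j)) = (\<Sum>j\<in>T \<inter> W s. Bm (s,j))"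
      proof (rule sum.mono_neutral_right[OF fT])
        show "T \<inter> W s \<subseteq> T" by blast
        show "\<forall>i\<in>T - T \<inter> W s. Bm (s,i) = 0"
        proof
          fix i assume "i \<in> T - T \<inter> W s"
          then have "i \<notin> W s" by blast
          then show "Bm (s,i) = 0" using Bmp[of "(s,i)"] by simp
        qed
      qed
      have "(\<Sum>j\<in>T \<inter> W s. Bm (s,j)) \<le> max 0 (real (R s) - real (card (W s - T)))"
      proof (cases "\<exists>j\<in>T \<inter> W s. Bm (s,j) > 0")
        case True
        then obtain j where j: "j \<in> T" "j \<in> W s" "Bm (s,j) > 0" by blast
        have one: "Bm (s,j') = 1" if j': "j' \<in> W s - T" for j'
        proof (rule ccontr)
          assume "Bm (s,j') \<noteq> 1"
          moreover have "Bm (s,j') \<le> 1" using Bmp[of "(s,j')"] j' s by auto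
          ultimately have "Bm (s,j') < 1" by simp
          then have "e j \<le> e j'" using opt[OF s j(2) _ Ls j(3)] j' by blast
          moreover have "e j > 0" using j by (simp add: T_def)
          moreover have "e j' \<le> 0" using j' WJ s by (auto simp: T_def)
          ultimately show False by simp
        qed
        have "real (R s) = (\<Sum>j\<in>W s. Bm (s,j))" using Bsum s by simp
        also have "\<dots> = (\<Sum>j\<in>W s \<inter> T. Bm (s,j)) + (\<Sum>j\<in>W s - T. Bm (s,j))"
          by (rule sum.Int_Diff[OF fW])
        also have "(\<Sum>j\<in>W s - T. Bm (s,j)) = real (card (W s - T))"
          using one by simp
        finally show ?thesis by (simp add: Int_commute)
      next
        case False
        have "\<forall>j\<in>T \<inter> W s. Bm (s,j) = 0"
        proof
          fix j assume "j \<in> T \<inter> W s"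
          then show "Bm (s,j) = 0" using False Bmp[of "(s,j)"] s by force
        qed
        then show ?thesis by simp
      qed
      then show ?thesis using eq Ls by (simp add: mult_left_mono)
    qed
    have ineq: "(\<Sum>j\<in>T. hh j) < (\<Sum>s\<in>S. L s * max 0 (real (R s) - real (card (W s - T))))"
    proof -
      have 4: "(\<Sum>s\<in>S. L s * (\<Sum>j\<in>T. Bm (s,j))) \<le> (\<Sum>s\<in>S. L s * max 0 (real (R s) - real (card (W s - T))))"
        by (rule sum_mono) (rule 3)
      show ?thesis using 1 2 4 by linarith
    qed
    show ?thesis by (intro disjI2 exI[of _ T] conjI TJ ineq)
  qed
qed



theorem theorem2:
  fixes n nu :: nat and N :: "nat \<Rightarrow> nat" and h :: "nat \<Rightarrow> nat"
    and l :: "real \<Rightarrow> real" and r a d :: "real \<Rightarrow> nat"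
  assumes "1 \<le> nu" and "nu \<le> n"
    and "N 0 = 0" and "\<And>\<kappa>. \<kappa> < nu \<Longrightarrow> N \<kappa> < N (Suc \<kappa>)" and "N nu = n"
    and "block_monotone N nu h"
    and "l \<in> borel_measurable unitI"
    and "r \<in> measurable unitI (count_space UNIV)"
    and "a \<in> measurable unitI (count_space UNIV)"
    and "d \<in> measurable unitI (count_space UNIV)"
    and "\<And>x. x \<in> {0..1} \<Longrightarrow> 0 \<le> l x"
    and "\<And>x. x \<in> {0..1} \<Longrightarrow> in_services N nu (r x, a x, d x)"
    and "integrable unitI (\<lambda>x. l x * real (r x))"
  shows "adequate N n h l r a d \<longleftrightarrow>
    (\<forall>k :: nat \<Rightarrow> nat. (\<forall>\<kappa>\<in>{1..nu}. k \<kappa> \<le> N \<kappa> - N (\<kappa> - 1))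
        \<longrightarrow> Wc N nu k h l r a d \<ge> 0)"
proof -
  note nu1 = assms(1) and nun = assms(2) and N0 = assms(3) and Nstr = assms(4) and Nnu = assms(5)
    and bm = assms(6) and lm = assms(7) and rm = assms(8) and am = assms(9) and dm = assms(10)
    and lnn = assms(11) and serv = assms(12) and lri = assms(13)
  have sp: "space unitI = {0..1}" by (simp add: unitI_def space_restrict_space)
  have Nle: "\<forall>\<kappa><d. N \<kappa> \<le> N (Suc \<kappa>)" if "d \<le> nu" for d
    using Nstr that by (simp add: less_imp_le)
  have Nmono: "N i \<le> N j" if "i \<le> j" "j \<le> nu" for i j
    using block_sum[OF that(1) Nle[OF that(2)]] by blast
  have servx: "a x < d x \<and> d x \<le> nu \<and> 0 < r x \<and> r x \<le> N (d x) - N (a x)" if "x \<in> {0..1}" for x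
    using serv[OF that] by (simp add: in_services_def)
  have lint: "integrable unitI l"
  proof (rule Bochner_Integration.integrable_bound[OF lri])
    show "l \<in> borel_measurable unitI" by (rule lm)
    show "AE x in unitI. norm (l x) \<le> norm (l x * real (r x))"
    proof (rule AE_I2)
      fix x assume "x \<in> space unitI"
      then have x: "x \<in> {0..1}" by (simp add: sp)
      have "r x \<ge> 1" using servx[OF x] by simp
      then have "l x * 1 \<le> l x * real (r x)" using lnn[OF x] by (intro mult_left_mono) auto
      then show "norm (l x) \<le> norm (l x * real (r x))" using lnn[OF x] \<open>r x \<ge> 1\<close> by simp
    qed
  qed
  have tym0: "(\<lambda>x. (r x, a x, d x)) \<in> unitI \<rightarrow>\<^sub>M count_space UNIV"
  proof -
    have "(\<lambda>x. (r x, a x, d x)) \<in> unitI \<rightarrow>\<^sub>M count_space UNIV \<Otimes>\<^sub>M (count_space UNIV \<Otimes>\<^sub>M count_space UNIV)"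
      using rm am dm by (intro measurable_Pair) auto
    then show ?thesis by (simp add: pair_measure_countable)
  qed
  have tym: "(\<lambda>x. G (r x, a x, d x)) \<in> borel_measurable unitI" for G :: "nat \<times> nat \<times> nat \<Rightarrow> real"
    using measurable_comp[OF tym0, of G borel] by (simp add: comp_def)
  show ?thesis
  proof
    assume "adequate N n h l r a d"
    then obtain A where Ameas: "(\<lambda>(x,j). A x j) \<in> borel_measurable (unitI \<Otimes>\<^sub>M count_space {1..n})"
      and A01: "\<forall>x\<in>{0..1}. \<forall>j\<in>{1..n}. 0 \<le> A x j \<and> A x j \<le> 1"
      and A0: "\<forall>x\<in>{0..1}. \<forall>j\<in>{1..n}. j \<notin> {N (a x) + 1 .. N (d x)} \<longrightarrow> A x j = 0"
      and Asum: "\<forall>x\<in>{0..1}. (\<Sum>j=1..n. A x j) = real (r x)"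
      and Aint: "\<forall>j\<in>{1..n}. (\<integral>x. l x * A x j \<partial>unitI) \<le> real (h j)"
      unfolding adequate_def by blast
    show "\<forall>k :: nat \<Rightarrow> nat. (\<forall>\<kappa>\<in>{1..nu}. k \<kappa> \<le> N \<kappa> - N (\<kappa> - 1)) \<longrightarrow> Wc N nu k h l r a d \<ge> 0"
    proof (intro allI impI)
      fix k :: "nat \<Rightarrow> nat" assume kb: "\<forall>\<kappa>\<in>{1..nu}. k \<kappa> \<le> N \<kappa> - N (\<kappa> - 1)"
      define Tl where "Tl \<kappa> = {N (\<kappa>-1) + k \<kappa> + 1..N \<kappa>}" for \<kappa>
      have TlJ: "Tl \<kappa> \<subseteq> {1..n}" if "\<kappa> \<in> {1..nu}" for \<kappa>
        using that Nmono[of \<kappa> nu] Nnu by (auto simp: Tl_def)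
      have kle: "N (\<kappa>-1) + k \<kappa> \<le> N \<kappa>" if "\<kappa> \<in> {1..nu}" for \<kappa>
        using that kb Nmono[of "\<kappa>-1" \<kappa>] by force
      have Ajm: "(\<lambda>x. A x j) \<in> borel_measurable unitI" if "j \<in> {1..n}" for j
      proof -
        have "(\<lambda>x. (x, j)) \<in> measurable unitI (unitI \<Otimes>\<^sub>M count_space {1..n})"
          using that by (intro measurable_Pair measurable_ident_sets measurable_const) auto
        from measurable_comp[OF this Ameas] show ?thesis by (simp add: comp_def)
      qed
      have lAint: "integrable unitI (\<lambda>x. l x * A x j)" if j: "j \<in> {1..n}" for j
      proof (rule Bochner_Integration.integrable_bound[OF lint])
        show "(\<lambda>x. l x * A x j) \<in> borel_measurable unitI"
          using Ajm[OF j] lm by (intro borel_measurable_times) auto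
        show "AE x in unitI. norm (l x * A x j) \<le> norm (l x)"
        proof (rule AE_I2)
          fix x assume "x \<in> space unitI"
          then have x: "x \<in> {0..1}" by (simp add: sp)
          have "l x * A x j \<le> l x" "0 \<le> l x * A x j"
            using A01 x j lnn[OF x] by (auto intro: mult_left_le)
          then show "norm (l x * A x j) \<le> norm (l x)" by simp
        qed
      qed
      have pw: "l x * max 0 (real (r x) - real (\<Sum>\<kappa> = a x + 1 .. d x. k \<kappa>))
          \<le> (\<Sum>\<kappa>=1..nu. \<Sum>j\<in>Tl \<kappa>. l x * A x j)" if x: "x \<in> {0..1}" for x
      proof -
        have ad: "a x < d x" "d x \<le> nu" using servx[OF x] by auto
        have WJ: "{N (a x)+1..N (d x)} \<subseteq> {1..n}" using Nmono[of "d x" nu] ad Nnu by auto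
        have "real (r x) = (\<Sum>j=1..n. A x j)" using Asum x by simp
        also have "\<dots> = (\<Sum>j\<in>{N (a x)+1..N (d x)}. A x j)"
          by (rule sum.mono_neutral_right) (use WJ A0 x in auto)
        also have "\<dots> = (\<Sum>\<kappa>=a x+1..d x. \<Sum>j\<in>{N(\<kappa>-1)+1..N \<kappa>}. A x j)"
          using block_sum[where a="a x" and d="d x" and N=N and f="\<lambda>j. A x j" and X=UNIV] ad Nle[OF ad(2)] by simp
        also have "\<dots> \<le> (\<Sum>\<kappa>=a x+1..d x. real (k \<kappa>) + (\<Sum>j\<in>Tl \<kappa>. A x j))"
        proof (rule sum_mono)
          fix \<kappa> assume \<kappa>: "\<kappa> \<in> {a x+1..d x}"
          then have \<kappa>1: "\<kappa> \<in> {1..nu}" using ad by auto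
          have hJ: "{N(\<kappa>-1)+1..N(\<kappa>-1)+k \<kappa>} \<subseteq> {1..n}"
            using kle[OF \<kappa>1] Nmono[of \<kappa> nu] \<kappa>1 Nnu by auto
          have split: "{N(\<kappa>-1)+1..N \<kappa>} = {N(\<kappa>-1)+1..N(\<kappa>-1)+k \<kappa>} \<union> Tl \<kappa>"
            using kle[OF \<kappa>1] by (auto simp: Tl_def)
          have "(\<Sum>j\<in>{N(\<kappa>-1)+1..N \<kappa>}. A x j) = (\<Sum>j\<in>{N(\<kappa>-1)+1..N(\<kappa>-1)+k \<kappa>}. A x j) + (\<Sum>j\<in>Tl \<kappa>. A x j)"
            unfolding split by (rule sum.union_disjoint) (auto simp: Tl_def)
          moreover have "(\<Sum>j\<in>{N(\<kappa>-1)+1..N(\<kappa>-1)+k \<kappa>}. A x j) \<le> (\<Sum>j\<in>{N(\<kappa>-1)+1..N(\<kappa>-1)+k \<kappa>}. 1)"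
            by (rule sum_mono) (use A01 x hJ in auto)
          ultimately show "(\<Sum>j\<in>{N(\<kappa>-1)+1..N \<kappa>}. A x j) \<le> real (k \<kappa>) + (\<Sum>j\<in>Tl \<kappa>. A x j)"
            by simp
        qed
        also have "\<dots> = real (\<Sum>\<kappa>=a x+1..d x. k \<kappa>) + (\<Sum>\<kappa>=a x+1..d x. \<Sum>j\<in>Tl \<kappa>. A x j)"
          by (simp add: sum.distrib)
        also have "(\<Sum>\<kappa>=a x+1..d x. \<Sum>j\<in>Tl \<kappa>. A x j) \<le> (\<Sum>\<kappa>=1..nu. \<Sum>j\<in>Tl \<kappa>. A x j)"
        proof (rule sum_mono2)
          show "{a x+1..d x} \<subseteq> {1..nu}" using ad by auto
          show "0 \<le> (\<Sum>j\<in>Tl \<kappa>. A x j)" if "\<kappa> \<in> {1..nu} - {a x+1..d x}" for \<kappa>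
            using that TlJ[of \<kappa>] A01 x by (intro sum_nonneg) auto
        qed simp
        finally have 1: "real (r x) - real (\<Sum>\<kappa>=a x+1..d x. k \<kappa>) \<le> (\<Sum>\<kappa>=1..nu. \<Sum>j\<in>Tl \<kappa>. A x j)"
          by simp
        have 2: "0 \<le> (\<Sum>\<kappa>=1..nu. \<Sum>j\<in>Tl \<kappa>. A x j)"
          using TlJ A01 x by (intro sum_nonneg) blast
        have "max 0 (real (r x) - real (\<Sum>\<kappa>=a x+1..d x. k \<kappa>)) \<le> (\<Sum>\<kappa>=1..nu. \<Sum>j\<in>Tl \<kappa>. A x j)"
          using 1 2 by simp
        then have "l x * max 0 (real (r x) - real (\<Sum>\<kappa>=a x+1..d x. k \<kappa>)) \<le> l x * (\<Sum>\<kappa>=1..nu. \<Sum>j\<in>Tl \<kappa>. A x j)"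
          using lnn[OF x] by (rule mult_left_mono)
        then show ?thesis by (simp add: sum_distrib_left)
      qed
      have int1: "integrable unitI (\<lambda>x. \<Sum>\<kappa>=1..nu. \<Sum>j\<in>Tl \<kappa>. l x * A x j)"
        by (intro Bochner_Integration.integrable_sum) (use TlJ lAint in blast)
      have "(\<integral>x. l x * max 0 (real (r x) - real (\<Sum>\<kappa> = a x + 1 .. d x. k \<kappa>)) \<partial>unitI)
          \<le> (\<integral>x. (\<Sum>\<kappa>=1..nu. \<Sum>j\<in>Tl \<kappa>. l x * A x j) \<partial>unitI)"
      proof (rule integral_mono'[OF int1])
        fix x assume "x \<in> space unitI"
        then have x: "x \<in> {0..1}" by (simp add: sp)
        show "l x * max 0 (real (r x) - real (\<Sum>\<kappa> = a x + 1 .. d x. k \<kappa>)) \<le> (\<Sum>\<kappa>=1..nu. \<Sum>j\<in>Tl \<kappa>. l x * A x j)"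
          by (rule pw[OF x])
        show "0 \<le> (\<Sum>\<kappa>=1..nu. \<Sum>j\<in>Tl \<kappa>. l x * A x j)"
          using TlJ A01 x lnn[OF x] by (intro sum_nonneg) (blast intro: mult_nonneg_nonneg)
      qed
      also have "\<dots> = (\<Sum>\<kappa>=1..nu. \<integral>x. (\<Sum>j\<in>Tl \<kappa>. l x * A x j) \<partial>unitI)"
        by (rule Bochner_Integration.integral_sum, intro Bochner_Integration.integrable_sum) (use TlJ lAint in blast)
      also have "\<dots> = (\<Sum>\<kappa>=1..nu. \<Sum>j\<in>Tl \<kappa>. \<integral>x. l x * A x j \<partial>unitI)"
        by (rule sum.cong[OF refl], rule Bochner_Integration.integral_sum) (use TlJ lAint in blast)
      also have "\<dots> \<le> (\<Sum>\<kappa>=1..nu. \<Sum>j\<in>Tl \<kappa>. real (h j))"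
        by (intro sum_mono) (use TlJ Aint in blast)
      finally show "Wc N nu k h l r a d \<ge> 0" by (simp add: Wc_def Tl_def)
    qed
  next
    assume W: "\<forall>k :: nat \<Rightarrow> nat. (\<forall>\<kappa>\<in>{1..nu}. k \<kappa> \<le> N \<kappa> - N (\<kappa> - 1)) \<longrightarrow> Wc N nu k h l r a d \<ge> 0"
    define ty where "ty x = (r x, a x, d x)" for x
    define S where "S = ty ` {0..1}"
    define Wi where "Wi s = {N (fst (snd s)) + 1..N (snd (snd s))}" for s :: "nat \<times> nat \<times> nat"
    define L where "L s = (\<integral>x. l x * (if ty x = s then 1 else 0) \<partial>unitI)" for s
    have tyS: "ty x \<in> S" if "x \<in> {0..1}" for x using that S_def by blast
    have ty0: "ty \<in> unitI \<rightarrow>\<^sub>M count_space UNIV" using tym0 by (simp add: ty_def[abs_def])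
    have Ssub: "S \<subseteq> {0..n} \<times> {0..nu} \<times> {0..nu}"
    proof
      fix s assume "s \<in> S"
      then obtain x where x: "x \<in> {0..1}" "s = ty x" by (auto simp: S_def)
      then show "s \<in> {0..n} \<times> {0..nu} \<times> {0..nu}"
        using servx[OF x(1)] Nmono[of "d x" nu] Nnu by (auto simp: ty_def)
    qed
    have fS: "finite S" using finite_subset[OF Ssub] by simp
    have Lint: "integrable unitI (\<lambda>x. l x * (if ty x = s then 1 else 0))" for s
    proof (rule Bochner_Integration.integrable_bound[OF lint])
      show "(\<lambda>x. l x * (if ty x = s then 1 else 0)) \<in> borel_measurable unitI"
        using lm tym[of "\<lambda>t. if t = s then 1 else 0"] by (intro borel_measurable_times) (auto simp: ty_def)
      show "AE x in unitI. norm (l x * (if ty x = s then 1 else 0)) \<le> norm (l x)"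
        by (rule AE_I2) simp
    qed
    have int_ty: "(\<integral>x. l x * g (ty x) \<partial>unitI) = (\<Sum>s\<in>S. g s * L s)" for g :: "nat \<times> nat \<times> nat \<Rightarrow> real"
    proof -
      have "(\<integral>x. l x * g (ty x) \<partial>unitI) = (\<integral>x. (\<Sum>s\<in>S. g s * (l x * (if ty x = s then 1 else 0))) \<partial>unitI)"
      proof (rule Bochner_Integration.integral_cong[OF refl])
        fix x assume "x \<in> space unitI"
        then have x: "x \<in> {0..1}" by (simp add: sp)
        have "(\<Sum>s\<in>S. g s * (l x * (if ty x = s then 1 else 0))) = (\<Sum>s\<in>S. if ty x = s then g s * l x else 0)"
          by (rule sum.cong) auto
        also have "\<dots> = g (ty x) * l x" using fS tyS[OF x] by (simp add: sum.delta')
        finally show "l x * g (ty x) = (\<Sum>s\<in>S. g s * (l x * (if ty x = s then 1 else 0)))" by simp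
      qed
      also have "\<dots> = (\<Sum>s\<in>S. \<integral>x. g s * (l x * (if ty x = s then 1 else 0)) \<partial>unitI)"
        by (rule Bochner_Integration.integral_sum) (intro integrable_mult_right Lint)
      also have "\<dots> = (\<Sum>s\<in>S. g s * L s)" by (simp add: L_def)
      finally show ?thesis .
    qed
    have Wi_ty: "Wi (ty x) = {N (a x) + 1 .. N (d x)}" for x by (simp add: Wi_def ty_def)
    have WJ: "\<forall>s\<in>S. Wi s \<subseteq> {1..n}"
    proof
      fix s assume "s \<in> S"
      then obtain x where x: "x \<in> {0..1}" "s = ty x" by (auto simp: S_def)
      then show "Wi s \<subseteq> {1..n}" using servx[OF x(1)] Nmono[of "d x" nu] Nnu by (auto simp: Wi_ty)
    qed
    have RW: "\<forall>s\<in>S. fst s \<le> card (Wi s)"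
    proof
      fix s assume "s \<in> S"
      then obtain x where x: "x \<in> {0..1}" "s = ty x" by (auto simp: S_def)
      then show "fst s \<le> card (Wi s)" using servx[OF x(1)] by (simp add: Wi_ty) (simp add: ty_def)
    qed
    have Lnn: "\<forall>s\<in>S. L s \<ge> 0"
    proof
      fix s assume "s \<in> S"
      show "L s \<ge> 0" unfolding L_def
        by (rule integral_nonneg_AE, rule AE_I2) (use lnn in \<open>simp add: sp\<close>)
    qed
    have dc: "(\<exists>B. (\<forall>s\<in>S. \<forall>j\<in>{1..n}. 0 \<le> B s j \<and> B s j \<le> 1 \<and> (j \<notin> Wi s \<longrightarrow> B s j = 0))
              \<and> (\<forall>s\<in>S. (\<Sum>j\<in>Wi s. B s j) = real (fst s))
              \<and> (\<forall>j\<in>{1..n}. (\<Sum>s\<in>S. L s * B s j) \<le> real (h j)))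
       \<or> (\<exists>T\<subseteq>{1..n}. (\<Sum>j\<in>T. real (h j)) < (\<Sum>s\<in>S. L s * max 0 (real (fst s) - real (card (Wi s - T)))))"
      by (rule discrete_core[OF fS finite_atLeastAtMost WJ RW Lnn])
    then show "adequate N n h l r a d"
    proof
      assume "\<exists>B. (\<forall>s\<in>S. \<forall>j\<in>{1..n}. 0 \<le> B s j \<and> B s j \<le> 1 \<and> (j \<notin> Wi s \<longrightarrow> B s j = 0))
              \<and> (\<forall>s\<in>S. (\<Sum>j\<in>Wi s. B s j) = real (fst s))
              \<and> (\<forall>j\<in>{1..n}. (\<Sum>s\<in>S. L s * B s j) \<le> real (h j))"
      then obtain B where B01: "\<forall>s\<in>S. \<forall>j\<in>{1..n}. 0 \<le> B s j \<and> B s j \<le> 1 \<and> (j \<notin> Wi s \<longrightarrow> B s j = 0)"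
        and Bsum: "\<forall>s\<in>S. (\<Sum>j\<in>Wi s. B s j) = real (fst s)"
        and Bh: "\<forall>j\<in>{1..n}. (\<Sum>s\<in>S. L s * B s j) \<le> real (h j)" by blast
      have c1: "(\<lambda>(x, j). B (ty x) j) \<in> borel_measurable (unitI \<Otimes>\<^sub>M count_space {1..n})"
      proof -
        have "(\<lambda>p. (ty (fst p), snd p)) \<in> (unitI \<Otimes>\<^sub>M count_space {1..n}) \<rightarrow>\<^sub>M (count_space UNIV \<Otimes>\<^sub>M count_space {1..n})"
          by (intro measurable_Pair measurable_comp[OF measurable_fst ty0, unfolded comp_def] measurable_snd)
        then have m2: "(\<lambda>p. (ty (fst p), snd p)) \<in> (unitI \<Otimes>\<^sub>M count_space {1..n}) \<rightarrow>\<^sub>M count_space (UNIV \<times> {1..n})"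
          by (simp add: pair_measure_countable)
        have "(\<lambda>(s,j). B s j) \<in> count_space (UNIV \<times> {1..n}) \<rightarrow>\<^sub>M borel" by simp
        from measurable_comp[OF m2 this] show ?thesis by (simp add: comp_def case_prod_beta)
      qed
      have c2: "\<forall>x\<in>{0..1}. \<forall>j\<in>{1..n}. 0 \<le> B (ty x) j \<and> B (ty x) j \<le> 1"
        using B01 tyS by blast
      have c3: "\<forall>x\<in>{0..1}. \<forall>j\<in>{1..n}. j \<notin> {N (a x) + 1 .. N (d x)} \<longrightarrow> B (ty x) j = 0"
      proof (intro ballI impI)
        fix x :: real and j assume x: "x \<in> {0..1}" and j: "j \<in> {1..n}"
          and nj: "j \<notin> {N (a x) + 1 .. N (d x)}"
        then have "j \<notin> Wi (ty x)" by (simp add: Wi_ty)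
        then show "B (ty x) j = 0" using B01 tyS[OF x] j by blast
      qed
      have c4: "\<forall>x\<in>{0..1}. (\<Sum>j=1..n. B (ty x) j) = real (r x)"
      proof
        fix x :: real assume x: "x \<in> {0..1}"
        have "(\<Sum>j=1..n. B (ty x) j) = (\<Sum>j\<in>Wi (ty x). B (ty x) j)"
          by (rule sum.mono_neutral_right) (use WJ B01 tyS[OF x] in auto)
        also have "\<dots> = real (r x)" using Bsum tyS[OF x] by (simp add: ty_def)
        finally show "(\<Sum>j=1..n. B (ty x) j) = real (r x)" .
      qed
      have c5: "\<forall>j\<in>{1..n}. (\<integral>x. l x * B (ty x) j \<partial>unitI) \<le> real (h j)"
      proof
        fix j :: nat assume j: "j \<in> {1..n}"
        have "(\<integral>x. l x * B (ty x) j \<partial>unitI) = (\<Sum>s\<in>S. B s j * L s)" by (rule int_ty)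
        also have "\<dots> \<le> real (h j)" using Bh j by (simp add: mult.commute)
        finally show "(\<integral>x. l x * B (ty x) j \<partial>unitI) \<le> real (h j)" .
      qed
      show "adequate N n h l r a d" unfolding adequate_def
        apply (rule exI[of _ "\<lambda>x j. B (ty x) j"])
        apply (intro conjI)
            apply (fact c1)
           apply (fact c2)
          apply (fact c3)
         apply (fact c4)
        apply (fact c5)
        done
    next
      assume "\<exists>T\<subseteq>{1..n}. (\<Sum>j\<in>T. real (h j)) < (\<Sum>s\<in>S. L s * max 0 (real (fst s) - real (card (Wi s - T))))"
      then obtain T where TJ: "T \<subseteq> {1..n}"
        and Tlt: "(\<Sum>j\<in>T. real (h j)) < (\<Sum>s\<in>S. L s * max 0 (real (fst s) - real (card (Wi s - T))))"
        by blast
      define k where "k \<kappa> = card ({N(\<kappa>-1)+1..N \<kappa>} - T)" for \<kappa>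
      have kb: "\<forall>\<kappa>\<in>{1..nu}. k \<kappa> \<le> N \<kappa> - N (\<kappa> - 1)"
      proof
        fix \<kappa> :: nat assume "\<kappa> \<in> {1..nu}"
        have "k \<kappa> \<le> card {N(\<kappa>-1)+1..N \<kappa>}" unfolding k_def by (rule card_mono) auto
        then show "k \<kappa> \<le> N \<kappa> - N (\<kappa> - 1)" by simp
      qed
      then have W0: "Wc N nu k h l r a d \<ge> 0" using W by blast
      have Iq: "(\<integral>x. l x * max 0 (real (r x) - real (\<Sum>\<kappa> = a x + 1 .. d x. k \<kappa>)) \<partial>unitI)
          = (\<Sum>s\<in>S. L s * max 0 (real (fst s) - real (card (Wi s - T))))"
      proof -
        have "(\<integral>x. l x * max 0 (real (r x) - real (\<Sum>\<kappa> = a x + 1 .. d x. k \<kappa>)) \<partial>unitI)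
          = (\<integral>x. l x * (\<lambda>s. max 0 (real (fst s) - real (\<Sum>\<kappa> = fst (snd s) + 1 .. snd (snd s). k \<kappa>))) (ty x) \<partial>unitI)"
          by (simp add: ty_def)
        also have "\<dots> = (\<Sum>s\<in>S. max 0 (real (fst s) - real (\<Sum>\<kappa> = fst (snd s) + 1 .. snd (snd s). k \<kappa>)) * L s)"
          by (rule int_ty)
        also have "\<dots> = (\<Sum>s\<in>S. L s * max 0 (real (fst s) - real (card (Wi s - T))))"
        proof (rule sum.cong[OF refl])
          fix s assume s: "s \<in> S"
          then obtain x where x: "x \<in> {0..1}" "s = ty x" by (auto simp: S_def)
          have ad: "a x < d x" "d x \<le> nu" using servx[OF x(1)] by auto
          have "real (card (Wi s - T)) = (\<Sum>j\<in>Wi s \<inter> -T. (1::real))" by (simp add: Diff_eq)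
          also have "\<dots> = (\<Sum>\<kappa>=a x+1..d x. \<Sum>j\<in>{N(\<kappa>-1)+1..N \<kappa>} \<inter> -T. (1::real))"
            using block_sum[where f="\<lambda>_. 1" and a="a x" and d="d x" and N=N and X="-T"] ad Nle[OF ad(2)] x(2)
            by (simp add: Wi_ty)
          also have "\<dots> = real (\<Sum>\<kappa>=a x+1..d x. k \<kappa>)" by (simp add: k_def Diff_eq)
          finally show "max 0 (real (fst s) - real (\<Sum>\<kappa> = fst (snd s) + 1 .. snd (snd s). k \<kappa>)) * L s
              = L s * max 0 (real (fst s) - real (card (Wi s - T)))"
            using x(2) by (simp add: ty_def mult.commute)
        qed
        finally show ?thesis .
      qed
      have tails: "(\<Sum>\<kappa>=1..nu. \<Sum>j = N (\<kappa> - 1) + k \<kappa> + 1 .. N \<kappa>. real (h j)) \<le> (\<Sum>j\<in>T. real (h j))"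
      proof -
        have "(\<Sum>j\<in>T. real (h j)) = (\<Sum>j\<in>{N 0+1..N nu} \<inter> T. real (h j))"
          using TJ N0 Nnu by (simp add: Int_absorb1)
        also have "\<dots> = (\<Sum>\<kappa>=0+1..nu. \<Sum>j\<in>{N(\<kappa>-1)+1..N \<kappa>} \<inter> T. real (h j))"
          using block_sum[where f="\<lambda>j. real (h j)" and a=0 and d=nu and N=N and X=T] Nle[of nu] by simp
        finally have eqT: "(\<Sum>j\<in>T. real (h j)) = (\<Sum>\<kappa>=1..nu. \<Sum>j\<in>{N(\<kappa>-1)+1..N \<kappa>} \<inter> T. real (h j))"
          by simp
        have "(\<Sum>j = N (\<kappa> - 1) + k \<kappa> + 1 .. N \<kappa>. real (h j)) \<le> (\<Sum>j\<in>{N(\<kappa>-1)+1..N \<kappa>} \<inter> T. real (h j))"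
          if \<kappa>: "\<kappa> \<in> {1..nu}" for \<kappa>
        proof -
          define U where "U = {N(\<kappa>-1)+1..N \<kappa>} \<inter> T"
          have pq: "N (\<kappa>-1) \<le> N \<kappa>" using \<kappa> Nmono[of "\<kappa>-1" \<kappa>] by auto
          have cU: "card U + k \<kappa> = N \<kappa> - N (\<kappa>-1)"
            using card_Int_Diff[of "{N(\<kappa>-1)+1..N \<kappa>}" T] by (simp add: U_def k_def)
          have eq: "N (\<kappa>-1) + k \<kappa> = N \<kappa> - card U" using cU pq by linarith
          have "(\<Sum>j = N (\<kappa> - 1) + k \<kappa> + 1 .. N \<kappa>. real (h j)) = (\<Sum>j = N \<kappa> - card U + 1 .. N \<kappa>. real (h j))"
            by (simp only: eq)
          also have "\<dots> = (\<Sum>i<card U. real (h (N \<kappa> - i)))"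
            by (rule ivl_reindex) (use cU in linarith)
          also have "\<dots> \<le> (\<Sum>j\<in>U. real (h j))"
          proof (rule mono_sum[where p="N (\<kappa>-1)"])
            show "\<forall>i j. N (\<kappa>-1) + 1 \<le> i \<and> i < j \<and> j \<le> N \<kappa> \<longrightarrow> real (h j) \<le> real (h i)"
              using bm \<kappa> unfolding block_monotone_def by auto
            show "U \<subseteq> {N (\<kappa>-1) + 1..N \<kappa>}" by (auto simp: U_def)
          qed
          finally show ?thesis by (simp add: U_def)
        qed
        then have "(\<Sum>\<kappa>=1..nu. \<Sum>j = N (\<kappa> - 1) + k \<kappa> + 1 .. N \<kappa>. real (h j))
            \<le> (\<Sum>\<kappa>=1..nu. \<Sum>j\<in>{N(\<kappa>-1)+1..N \<kappa>} \<inter> T. real (h j))" by (rule sum_mono)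
        then show ?thesis using eqT by simp
      qed
      have "Wc N nu k h l r a d < 0" using tails Iq Tlt by (simp add: Wc_def)
      with W0 show "adequate N n h l r a d" by simp
    qed
  qed
qed

end
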